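(* Let $(X_i,T_i,\delta_i,\xi_i,\xi_i\nu_i)$, $i=1,\ldots,n$, be observations from the mixture cure model with partially known cure status (context), with distinct observed times $T_{(1)}<\cdots<T_{(n)}$ and concomitants $\delta_{[i]},\xi_{[i]},\nu_{[i]}$, and let $B_{h[i]}(x)\ge 0$ be the Nadaraya–Watson weights at a fixed covariate value $x$. Consider the local (kernel-weighted) likelihood of a subprobability distribution putting mass $P_i=P_i(x)\ge 0$ at $T_{(i)}$, $i=1,\dots,n$, with $\sum_i P_i\le 1$ and remaining mass $1-\sum_iP_i$ at $+\infty$ (the cured fraction): $$L(P_1,\ldots,P_n)=\prod_{i=1}^n P_i^{B_{h[i]}(x)\mathbf 1(\delta_{[i]}=1)}\Big(1-\sum_{j=1}^{i-1}P_j\Big)^{B_{h[i]}(x)\mathbf 1(\delta_{[i]}=0,\xi_{[i]}\nu_{[i]}=0)}\Big(1-\sum_{j=1}^{n}P_j\Big)^{B_{h[i]}(x)\mathbf 1(\delta_{[i]}=0,\xi_{[i]}\nu_{[i]}=1)}.$$ Then $L$ is maximized by a distribution whose survival function $1-\sum_{j:T_{(j)}\le t}P_j$ equals $$\widehat S_h^c(t\mid x)=1-\widehat F_h^c(t\mid x)=\prod_{i=1}^{n}\left\{1-\frac{\delta_{[i]}B_{h[i]}(x)\mathbf 1(T_{(i)}\le t)}{\sum_{j=i}^{n}B_{h[j]}(x)+\sum_{j=1}^{i-1}B_{h[j]}(x)\mathbf 1(\xi_{[j]}\nu_{[j]}=1)}\right\},$$ i.e. $1-\widehat F_h^c(t\mid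 x)$ is the nonparametric local maximum likelihood estimator of $1-F(t\mid x)$.
   Context: Mixture cure model: $Y\in(0,\infty]$ survival time ($Y=\infty$ iff cured), $\nu=\mathbf 1(Y=\infty)$, censoring time $C$ conditionally independent of $(Y,\nu)$ given the covariate $X$; observed $T=\min(Y,C)$, $\delta=\mathbf 1(Y\le C)$, $\xi$ indicates whether the cure status is known, and $\xi\nu$ is observed. $F(t\mid x)=P(Y\le t\mid X=x)$. Nadaraya–Watson weights: $B_{hi}(x)=K_h(x-X_i)/\sum_{j}K_h(x-X_j)$ with $K_h(u)=K(u/h)/h$ for a kernel $K$ and bandwidth $h$; $B_{h[i]}(x)$ is the weight of the observation with time $T_{(i)}$. Denominators in the product are assumed nonzero. *)

theory Defs
  imports Complex_Main
begin

text \<open>Observations are indexed 1..n in the order of the (distinct) observed times,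
  so T i = T_(i), X i, delta i, xi i, nu i are the concomitants X_[i], delta_[i], ... .\<close>

definition Kh :: "(real \<Rightarrow> real) \<Rightarrow> real \<Rightarrow> real \<Rightarrow> real" where
  "Kh K h u = K (u / h) / h"

definition nw_weight :: "(real \<Rightarrow> real) \<Rightarrow> real \<Rightarrow> (nat \<Rightarrow> real) \<Rightarrow> nat \<Rightarrow> real \<Rightarrow> nat \<Rightarrow> real" where
  "nw_weight K h X n x i = Kh K h (x - X i) / (\<Sum>j=1..n. Kh K h (x - X j))"

text \<open>Power with the convention a^0 = 1 (also for a = 0), as in the likelihood.\<close>
definition rpow :: "real \<Rightarrow> real \<Rightarrow> real" where
  "rpow a b = (if b = 0 then 1 else a powr b)"

text \<open>Subprobability masses P_1..P_n on T_(1)..T_(n); remaining mass at infinity.\<close>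
definition subprob :: "nat \<Rightarrow> (nat \<Rightarrow> real) \<Rightarrow> bool" where
  "subprob n P \<longleftrightarrow> (\<forall>i\<in>{1..n}. 0 \<le> P i) \<and> (\<Sum>i=1..n. P i) \<le> 1"

text \<open>Local (kernel-weighted) likelihood; xinu i stands for xi_[i] nu_[i] = 1.\<close>
definition loc_lik :: "nat \<Rightarrow> (nat \<Rightarrow> real) \<Rightarrow> (nat \<Rightarrow> bool) \<Rightarrow> (nat \<Rightarrow> bool) \<Rightarrow> (nat \<Rightarrow> real) \<Rightarrow> real" where
  "loc_lik n B delta xinu P =
     (\<Prod>i=1..n.
        rpow (P i) (B i * of_bool (delta i))
      * rpow (1 - (\<Sum>j=1..<i. P j)) (B i * of_bool (\<not> delta i \<and> \<not> xinu i))
      * rpow (1 - (\<Sum>j=1..n. P j)) (B i * of_bool (\<not> delta i \<and> xinu i)))"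

definition S_hat :: "nat \<Rightarrow> (nat \<Rightarrow> real) \<Rightarrow> (nat \<Rightarrow> real) \<Rightarrow> (nat \<Rightarrow> bool) \<Rightarrow> (nat \<Rightarrow> bool) \<Rightarrow> real \<Rightarrow> real" where
  "S_hat n B T delta xinu t =
     (\<Prod>i=1..n. 1 - (of_bool (delta i) * B i * of_bool (T i \<le> t)) /
        ((\<Sum>j=i..n. B j) + (\<Sum>j=1..<i. B j * of_bool (xinu j))))"

end

theory Submission
  imports Defs "HOL-Analysis.Analysis"
begin

lemma rpow_nonneg: "0 \<le> rpow x e"
  by (simp add: rpow_def)

lemma rpow_0 [simp]: "rpow x 0 = 1"
  by (simp add: rpow_def)

lemma rpow_1 [simp]: "rpow 1 e = 1"
  by (simp add: rpow_def)

lemma rpow_add: "0 \<le> a \<Longrightarrow> 0 \<le> b \<Longrightarrow> rpow x (a + b) = rpow x a * rpow x b"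
  by (simp add: rpow_def powr_add)

lemma rpow_mult: "0 \<le> x \<Longrightarrow> 0 \<le> y \<Longrightarrow> rpow (x * y) e = rpow x e * rpow y e"
  by (simp add: rpow_def powr_mult)

lemma rpow_mono: "0 \<le> x \<Longrightarrow> x \<le> y \<Longrightarrow> 0 \<le> e \<Longrightarrow> rpow x e \<le> rpow y e"
  by (simp add: rpow_def powr_mono2)

lemma rpow_sum:
  assumes "finite A" "\<And>i. i \<in> A \<Longrightarrow> 0 \<le> e i"
  shows "(\<Prod>i\<in>A. rpow x (e i)) = rpow x (\<Sum>i\<in>A. e i)"
  using assms
proof (induction A rule: finite_induct)
  case empty then show ?case by simp
next
  case (insert y F)
  then show ?case by (simp add: rpow_add sum_nonneg)
qed

definition gam :: "real \<Rightarrow> real \<Rightarrow> real" where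
  "gam a b = rpow (a / (a + b)) a * rpow (b / (a + b)) b"

lemma amgm_pos:
  fixes x y a b :: real
  assumes "0 < x" "0 < y" "0 < a" "0 < b"
  shows "x powr a * y powr b \<le> (a/(a+b)) powr a * (b/(a+b)) powr b * (x+y) powr (a+b)"
proof -
  define p where "p = a/(a+b)"
  define q where "q = b/(a+b)"
  have ab0: "0 < a + b" using assms by simp
  have p: "0 < p" and q: "0 < q" using assms by (auto simp: p_def q_def)
  have pq: "p + q = 1" using ab0 by (simp add: p_def q_def add_divide_distrib[symmetric])
  have Y: "(x/p) powr p * (y/q) powr q \<le> p*(x/p) + q*(y/q)"
    by (rule Youngs_inequality_0) (use p q pq assms in auto)
  also have "\<dots> = x + y" using p q by simp
  finally have Y2: "(x/p) powr p * (y/q) powr q \<le> x + y" .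
  have ab: "0 < a + b" using assms by simp
  have "((x/p) powr p * (y/q) powr q) powr (a+b) \<le> (x+y) powr (a+b)"
    by (rule powr_mono2) (use Y2 ab in auto)
  moreover have "((x/p) powr p * (y/q) powr q) powr (a+b) = (x/p) powr a * (y/q) powr b"
    using ab by (simp add: powr_mult powr_powr p_def q_def)
  moreover have "(x/p) powr a = x powr a / p powr a" "(y/q) powr b = y powr b / q powr b"
    using p q assms by (simp_all add: powr_divide)
  ultimately have "x powr a / p powr a * (y powr b / q powr b) \<le> (x+y) powr (a+b)" by simp
  moreover have "0 < p powr a" "0 < q powr b" using p q by auto
  ultimately show ?thesis unfolding p_def[symmetric] q_def[symmetric]
    by (simp add: field_simps)
qed

lemma amgm:
  fixes x y a b :: real
  assumes "0 \<le> x" "0 \<le> y" "0 \<le> a" "0 \<le> b"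
  shows "rpow x a * rpow y b \<le> gam a b * rpow (x+y) (a+b)"
proof (cases "a = 0 \<or> b = 0")
  case True
  then show ?thesis
  proof
    assume a: "a = 0"
    show ?thesis
    proof (cases "b = 0")
      case True then show ?thesis using a by (simp add: gam_def)
    next
      case False then show ?thesis using a assms by (simp add: gam_def rpow_mono)
    qed
  next
    assume b: "b = 0"
    show ?thesis
    proof (cases "a = 0")
      case True then show ?thesis using b by (simp add: gam_def)
    next
      case False then show ?thesis using b assms by (simp add: gam_def rpow_mono)
    qed
  qed
next
  case False
  then have a: "0 < a" and b: "0 < b" using assms by auto
  show ?thesis
  proof (cases "x = 0 \<or> y = 0")
    case True
    then have "rpow x a * rpow y b = 0" using a b by (auto simp: rpow_def)
    moreover have "0 \<le> gam a b * rpow (x+y) (a+b)" by (simp add: gam_def rpow_nonneg)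
    ultimately show ?thesis by auto
  next
    case False
    then have "0 < x" "0 < y" using assms by auto
    from amgm_pos[OF this a b] show ?thesis using a b
      by (simp add: gam_def rpow_def)
  qed
qed

lemma amgm_eq:
  fixes r a b :: real
  assumes "0 \<le> r" "0 \<le> a" "0 \<le> b"
  shows "rpow (r * (a/(a+b))) a * rpow (r * (1 - a/(a+b))) b = gam a b * rpow r (a+b)"
proof (cases "a + b = 0")
  case True
  then have "a = 0" "b = 0" using assms by auto
  then show ?thesis by (simp add: gam_def)
next
  case False
  then have ab: "0 < a + b" using assms by auto
  have "1 - a/(a+b) = b/(a+b)" using ab by (simp add: field_simps)
  then have "rpow (r * (a/(a+b))) a * rpow (r * (1 - a/(a+b))) b
     = rpow r a * rpow (a/(a+b)) a * (rpow r b * rpow (b/(a+b)) b)"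
    using assms ab by (simp only: rpow_mult divide_nonneg_nonneg add_nonneg_nonneg)
  then show ?thesis using assms ab
    by (simp add: rpow_add gam_def)
qed

definition EE :: "nat \<Rightarrow> (nat \<Rightarrow> real) \<Rightarrow> (nat \<Rightarrow> real) \<Rightarrow> real \<Rightarrow> nat \<Rightarrow> real" where
  "EE n a c W m = (\<Sum>j=m..n. a j + c j) + W"

definition lam :: "nat \<Rightarrow> (nat \<Rightarrow> real) \<Rightarrow> (nat \<Rightarrow> real) \<Rightarrow> real \<Rightarrow> nat \<Rightarrow> real" where
  "lam n a c W j = a j / (a j + EE n a c W (Suc j))"

definition HH :: "nat \<Rightarrow> (nat \<Rightarrow> real) \<Rightarrow> (nat \<Rightarrow> real) \<Rightarrow> real \<Rightarrow> nat \<Rightarrow> real \<Rightarrow> (nat \<Rightarrow> real) \<Rightarrow> real" where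
  "HH n a c W m r Q = (\<Prod>j=m..n. rpow (Q j) (a j) * rpow (r - (\<Sum>i=m..<j. Q i)) (c j))
      * rpow (r - (\<Sum>i=m..n. Q i)) W"

definition CC :: "nat \<Rightarrow> (nat \<Rightarrow> real) \<Rightarrow> (nat \<Rightarrow> real) \<Rightarrow> real \<Rightarrow> nat \<Rightarrow> real" where
  "CC n a c W m = (\<Prod>j=m..n. gam (a j) (EE n a c W (Suc j)))"

definition QH :: "nat \<Rightarrow> (nat \<Rightarrow> real) \<Rightarrow> (nat \<Rightarrow> real) \<Rightarrow> real \<Rightarrow> nat \<Rightarrow> real \<Rightarrow> nat \<Rightarrow> real" where
  "QH n a c W m r j = r * (\<Prod>i=m..<j. 1 - lam n a c W i) * lam n a c W j"

lemma gam_nonneg: "0 \<le> gam a b"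
  by (simp add: gam_def rpow_nonneg)

lemma CC_nonneg: "0 \<le> CC n a c W m"
  unfolding CC_def by (rule prod_nonneg) (simp add: gam_nonneg)

lemma EE_nonneg:
  assumes "\<And>j. 0 \<le> a j" "\<And>j. 0 \<le> c j" "0 \<le> W"
  shows "0 \<le> EE n a c W m"
  unfolding EE_def using assms by (simp add: sum_nonneg add_nonneg_nonneg)

lemma EE_step: "m \<le> n \<Longrightarrow> EE n a c W m = a m + c m + EE n a c W (Suc m)"
  unfolding EE_def by (simp add: sum.atLeast_Suc_atMost)

lemma EE_base: "EE n a c W (Suc n) = W"
  unfolding EE_def by simp

lemma CC_step: "m \<le> n \<Longrightarrow> CC n a c W m = gam (a m) (EE n a c W (Suc m)) * CC n a c W (Suc m)"
  unfolding CC_def by (simp add: prod.atLeast_Suc_atMost)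

lemma CC_base: "CC n a c W (Suc n) = 1"
  unfolding CC_def by simp

lemma HH_base: "HH n a c W (Suc n) r Q = rpow r W"
  unfolding HH_def by simp

lemma HH_step:
  assumes "m \<le> n"
  shows "HH n a c W m r Q = rpow (Q m) (a m) * rpow r (c m) * HH n a c W (Suc m) (r - Q m) Q"
proof -
  have 1: "(\<Prod>j=m..n. rpow (Q j) (a j) * rpow (r - (\<Sum>i=m..<j. Q i)) (c j))
     = rpow (Q m) (a m) * rpow r (c m) *
       (\<Prod>j=Suc m..n. rpow (Q j) (a j) * rpow ((r - Q m) - (\<Sum>i=Suc m..<j. Q i)) (c j))"
  proof -
    have "(\<Prod>j=Suc m..n. rpow (Q j) (a j) * rpow (r - (\<Sum>i=m..<j. Q i)) (c j))
        = (\<Prod>j=Suc m..n. rpow (Q j) (a j) * rpow ((r - Q m) - (\<Sum>i=Suc m..<j. Q i)) (c j))"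
      by (rule prod.cong) (auto simp: sum.atLeast_Suc_lessThan algebra_simps)
    then show ?thesis using assms by (simp add: prod.atLeast_Suc_atMost)
  qed
  have 2: "(\<Sum>i=m..n. Q i) = Q m + (\<Sum>i=Suc m..n. Q i)"
    using assms by (simp add: sum.atLeast_Suc_atMost)
  show ?thesis unfolding HH_def 1 2 by (simp add: algebra_simps)
qed

lemma HH_cong:
  assumes "\<And>j. j \<in> {m..n} \<Longrightarrow> Q j = Q' j"
  shows "HH n a c W m r Q = HH n a c W m r Q'"
proof -
  have "(\<Sum>i=m..n. Q i) = (\<Sum>i=m..n. Q' i)" using assms by simp
  moreover have "(\<Prod>j=m..n. rpow (Q j) (a j) * rpow (r - (\<Sum>i=m..<j. Q i)) (c j))
     = (\<Prod>j=m..n. rpow (Q' j) (a j) * rpow (r - (\<Sum>i=m..<j. Q' i)) (c j))"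
  proof (rule prod.cong)
    fix j assume j: "j \<in> {m..n}"
    have "(\<Sum>i=m..<j. Q i) = (\<Sum>i=m..<j. Q' i)" using assms j by (intro sum.cong) auto
    then show "rpow (Q j) (a j) * rpow (r - (\<Sum>i=m..<j. Q i)) (c j)
       = rpow (Q' j) (a j) * rpow (r - (\<Sum>i=m..<j. Q' i)) (c j)" using assms j by simp
  qed simp
  ultimately show ?thesis unfolding HH_def by simp
qed

lemma HH_bound:
  assumes a: "\<And>j. 0 \<le> a j" and c: "\<And>j. 0 \<le> c j" and W: "0 \<le> W"
  assumes "m \<le> Suc n"
  shows "\<forall>r Q. 0 \<le> r \<longrightarrow> (\<forall>j\<in>{m..n}. 0 \<le> Q j) \<longrightarrow> (\<Sum>j=m..n. Q j) \<le> r
           \<longrightarrow> HH n a c W m r Q \<le> rpow r (EE n a c W m) * CC n a c W m"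
  using assms(4)
proof (induction m rule: inc_induct)
  case base
  then show ?case by (simp add: HH_base EE_base CC_base)
next
  case (step m)
  show ?case
  proof (intro allI impI)
    fix r :: real and Q :: "nat \<Rightarrow> real" assume r: "0 \<le> r" and Q: "\<forall>j\<in>{m..n}. 0 \<le> Q j" and s: "(\<Sum>j=m..n. Q j) \<le> r"
    have mn: "m \<le> n" using step by simp
    have s2: "(\<Sum>j=m..n. Q j) = Q m + (\<Sum>j=Suc m..n. Q j)"
      using mn by (simp add: sum.atLeast_Suc_atMost)
    have t0: "0 \<le> (\<Sum>j=Suc m..n. Q j)" using Q by (auto intro!: sum_nonneg)
    have Qm: "0 \<le> Q m" using Q mn by auto
    have rq: "0 \<le> r - Q m" using s s2 t0 by linarith
    have IH: "HH n a c W (Suc m) (r - Q m) Q \<le> rpow (r - Q m) (EE n a c W (Suc m)) * CC n a c W (Suc m)"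
      using step.IH rq Q s s2 by auto
    have E0: "0 \<le> EE n a c W (Suc m)" by (rule EE_nonneg[OF a c W])
    have "HH n a c W m r Q = rpow (Q m) (a m) * rpow r (c m) * HH n a c W (Suc m) (r - Q m) Q"
      by (rule HH_step[OF mn])
    also have "\<dots> \<le> rpow (Q m) (a m) * rpow r (c m) * (rpow (r - Q m) (EE n a c W (Suc m)) * CC n a c W (Suc m))"
      by (rule mult_left_mono[OF IH]) (simp add: rpow_nonneg)
    also have "\<dots> = rpow r (c m) * CC n a c W (Suc m) * (rpow (Q m) (a m) * rpow (r - Q m) (EE n a c W (Suc m)))"
      by (simp add: algebra_simps)
    also have "\<dots> \<le> rpow r (c m) * CC n a c W (Suc m) * (gam (a m) (EE n a c W (Suc m)) * rpow (Q m + (r - Q m)) (a m + EE n a c W (Suc m)))"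
      by (rule mult_left_mono[OF amgm[OF Qm rq a E0]]) (simp add: rpow_nonneg CC_nonneg)
    also have "\<dots> = rpow r (EE n a c W m) * CC n a c W m"
      using mn a c E0 by (simp add: EE_step CC_step rpow_add add_nonneg_nonneg algebra_simps)
    finally show "HH n a c W m r Q \<le> rpow r (EE n a c W m) * CC n a c W m" .
  qed
qed

lemma lam_bounds:
  assumes a: "\<And>j. 0 \<le> a j" and c: "\<And>j. 0 \<le> c j" and W: "0 \<le> W"
  shows "0 \<le> lam n a c W j" "lam n a c W j \<le> 1"
proof -
  have E0: "0 \<le> EE n a c W (Suc j)" by (rule EE_nonneg[OF a c W])
  show "0 \<le> lam n a c W j" unfolding lam_def using a E0 by simp
  show "lam n a c W j \<le> 1" unfolding lam_def using a[of j] E0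
    by (cases "a j + EE n a c W (Suc j) = 0") (auto simp: divide_le_eq_1)
qed

lemma HH_eq:
  assumes a: "\<And>j. 0 \<le> a j" and c: "\<And>j. 0 \<le> c j" and W: "0 \<le> W"
  assumes "m \<le> Suc n"
  shows "\<forall>r. 0 \<le> r \<longrightarrow> HH n a c W m r (QH n a c W m r) = rpow r (EE n a c W m) * CC n a c W m"
  using assms(4)
proof (induction m rule: inc_induct)
  case base
  then show ?case by (simp add: HH_base EE_base CC_base)
next
  case (step m)
  show ?case
  proof (intro allI impI)
    fix r :: real assume r: "0 \<le> r"
    have mn: "m \<le> n" using step by simp
    define l where "l = lam n a c W m"
    have l0: "0 \<le> l" "l \<le> 1" unfolding l_def using lam_bounds[OF a c W] by auto
    have r1: "0 \<le> r * (1 - l)" using r l0 by simp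
    have Qm: "QH n a c W m r m = r * l" unfolding QH_def l_def by simp
    have Qs: "HH n a c W (Suc m) (r - r * l) (QH n a c W m r)
        = HH n a c W (Suc m) (r * (1 - l)) (QH n a c W (Suc m) (r * (1 - l)))"
    proof -
      have "HH n a c W (Suc m) (r - r * l) (QH n a c W m r)
          = HH n a c W (Suc m) (r * (1 - l)) (QH n a c W m r)" by (simp add: algebra_simps)
      also have "\<dots> = HH n a c W (Suc m) (r * (1 - l)) (QH n a c W (Suc m) (r * (1 - l)))"
        by (rule HH_cong) (auto simp: QH_def l_def prod.atLeast_Suc_lessThan)
      finally show ?thesis .
    qed
    have E0: "0 \<le> EE n a c W (Suc m)" by (rule EE_nonneg[OF a c W])
    have "HH n a c W m r (QH n a c W m r)
       = rpow (r * l) (a m) * rpow r (c m) * (rpow (r * (1 - l)) (EE n a c W (Suc m)) * CC n a c W (Suc m))"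
      using HH_step[OF mn, of a c W r "QH n a c W m r"] Qm Qs step.IH r1 by simp
    also have "\<dots> = rpow r (c m) * CC n a c W (Suc m) * (rpow (r * l) (a m) * rpow (r * (1 - l)) (EE n a c W (Suc m)))"
      by (simp add: algebra_simps)
    also have "\<dots> = rpow r (c m) * CC n a c W (Suc m) * (gam (a m) (EE n a c W (Suc m)) * rpow r (a m + EE n a c W (Suc m)))"
      using amgm_eq[OF r a E0] unfolding l_def lam_def by simp
    also have "\<dots> = rpow r (EE n a c W m) * CC n a c W m"
      using mn a c E0 by (simp add: EE_step CC_step rpow_add add_nonneg_nonneg algebra_simps)
    finally show "HH n a c W m r (QH n a c W m r) = rpow r (EE n a c W m) * CC n a c W m" .
  qed
qed

lemma telescope:
  "1 - (\<Sum>j=1..k. QH n a c W 1 1 j) = (\<Prod>j=1..k. 1 - lam n a c W j)"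
proof (induction k)
  case 0 then show ?case by simp
next
  case (Suc k)
  have "QH n a c W 1 1 (Suc k) = (\<Prod>j=1..k. 1 - lam n a c W j) * lam n a c W (Suc k)"
    unfolding QH_def by (simp add: atLeastLessThanSuc_atLeastAtMost)
  then show ?case using Suc by (simp add: algebra_simps)
qed

lemma down_closed_eq:
  fixes T :: "nat \<Rightarrow> real"
  assumes sm: "strict_mono_on {1..n} T"
  shows "\<exists>k\<le>n. {j\<in>{1..n}. T j \<le> t} = {1..k}"
proof (cases "{j\<in>{1..n}. T j \<le> t} = {}")
  case True then show ?thesis by (intro exI[of _ 0]) auto
next
  case False
  define A where "A = {j\<in>{1..n}. T j \<le> t}"
  define k where "k = Max A"
  have fin: "finite A" unfolding A_def by simp
  have ne: "A \<noteq> {}" using False unfolding A_def .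
  have kA: "k \<in> A" unfolding k_def using fin ne by (rule Max_in)
  have kn: "k \<le> n" "1 \<le> k" "T k \<le> t" using kA unfolding A_def by auto
  have "A = {1..k}"
  proof
    show "A \<subseteq> {1..k}"
    proof
      fix j assume j: "j \<in> A"
      have "j \<le> k" unfolding k_def using fin j by (rule Max_ge)
      moreover have "1 \<le> j" using j unfolding A_def by simp
      ultimately show "j \<in> {1..k}" by simp
    qed
    show "{1..k} \<subseteq> A"
    proof
      fix j assume j: "j \<in> {1..k}"
      have jn: "j \<in> {1..n}" "k \<in> {1..n}" using j kn by auto
      have "T j \<le> T k"
      proof (cases "j = k")
        case False
        then have "j < k" using j by simp
        from strict_mono_onD[OF sm jn this] show ?thesis by simp
      qed simp
      then show "j \<in> A" using jn kn unfolding A_def by simp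
    qed
  qed
  then show ?thesis using kn unfolding A_def by blast
qed

theorem proposition2:
  fixes n :: nat and K :: "real \<Rightarrow> real" and h x :: real
    and X T :: "nat \<Rightarrow> real" and delta xi nu :: "nat \<Rightarrow> bool"
  assumes "h > 0"
    and "strict_mono_on {1..n} T"
    and "\<forall>i\<in>{1..n}. 0 \<le> nw_weight K h X n x i"
    and "\<forall>i\<in>{1..n}. nu i \<longrightarrow> \<not> delta i"
    and "\<forall>i\<in>{1..n}. (\<Sum>j=i..n. nw_weight K h X n x j)
            + (\<Sum>j=1..<i. nw_weight K h X n x j * of_bool (xi j \<and> nu j)) \<noteq> 0"
  shows "\<exists>P. subprob n P
     \<and> (\<forall>Q. subprob n Q \<longrightarrow>
          loc_lik n (nw_weight K h X n x) delta (\<lambda>i. xi i \<and> nu i) Q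
          \<le> loc_lik n (nw_weight K h X n x) delta (\<lambda>i. xi i \<and> nu i) P)
     \<and> (\<forall>t::real. 1 - (\<Sum>j\<in>{j\<in>{1..n}. T j \<le> t}. P j)
          = S_hat n (nw_weight K h X n x) T delta (\<lambda>i. xi i \<and> nu i) t)"
proof -
  define B where "B = nw_weight K h X n x"
  define xn where "xn = (\<lambda>i. xi i \<and> nu i)"
  have B0: "\<And>i. i \<in> {1..n} \<Longrightarrow> 0 \<le> B i" using assms(3) by (auto simp: B_def)
  have xnd: "\<And>i. i \<in> {1..n} \<Longrightarrow> xn i \<Longrightarrow> \<not> delta i" using assms(4) by (auto simp: xn_def)
  define a where "a = (\<lambda>i. if i \<in> {1..n} then B i * of_bool (delta i) else 0)"
  define c where "c = (\<lambda>i. if i \<in> {1..n} then B i * of_bool (\<not> delta i \<and> \<not> xn i) else 0)"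
  define W where "W = (\<Sum>i=1..n. B i * of_bool (\<not> delta i \<and> xn i))"
  have a0: "\<And>j. 0 \<le> a j" using B0 by (simp add: a_def)
  have c0: "\<And>j. 0 \<le> c j" using B0 by (simp add: c_def)
  have W0: "0 \<le> W" unfolding W_def using B0 by (intro sum_nonneg) simp
  define P where "P = QH n a c W 1 1"
  have L: "loc_lik n B delta xn Q = HH n a c W 1 1 Q" for Q
  proof -
    have "loc_lik n B delta xn Q =
      (\<Prod>i=1..n. rpow (Q i) (a i) * rpow (1 - (\<Sum>j=1..<i. Q j)) (c i))
      * (\<Prod>i=1..n. rpow (1 - (\<Sum>j=1..n. Q j)) (B i * of_bool (\<not> delta i \<and> xn i)))"
      unfolding loc_lik_def prod.distrib[symmetric] by (intro prod.cong) (auto simp: a_def c_def)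
    also have "(\<Prod>i=1..n. rpow (1 - (\<Sum>j=1..n. Q j)) (B i * of_bool (\<not> delta i \<and> xn i)))
       = rpow (1 - (\<Sum>j=1..n. Q j)) W"
      unfolding W_def using B0 by (intro rpow_sum) auto
    finally show ?thesis unfolding HH_def by simp
  qed
  have Pmax: "HH n a c W 1 1 Q \<le> HH n a c W 1 1 P" if "subprob n Q" for Q
  proof -
    have "HH n a c W 1 1 Q \<le> rpow 1 (EE n a c W 1) * CC n a c W 1"
      using HH_bound[where a=a and c=c and W=W and m=1 and n=n, OF a0 c0 W0] that by (auto simp: subprob_def simp del: rpow_1)
    also have "\<dots> = HH n a c W 1 1 P"
      using HH_eq[where a=a and c=c and W=W and m=1 and n=n, OF a0 c0 W0] by (simp add: P_def)
    finally show ?thesis .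
  qed
  have lb: "0 \<le> lam n a c W j" "lam n a c W j \<le> 1" for j
    using lam_bounds[where a=a and c=c and W=W and n=n, OF a0 c0 W0] by auto
  have subP: "subprob n P"
  proof -
    have "0 \<le> P i" for i unfolding P_def QH_def using lb
      by (intro mult_nonneg_nonneg prod_nonneg) auto
    moreover have "0 \<le> 1 - (\<Sum>j=1..n. P j)"
      unfolding P_def telescope using lb by (intro prod_nonneg) auto
    ultimately show ?thesis unfolding subprob_def by auto
  qed
  have D: "a i + EE n a c W (Suc i) = (\<Sum>j=i..n. B j) + (\<Sum>j=1..<i. B j * of_bool (xn j))"
    if i: "i \<in> {1..n}" and d: "delta i" for i
  proof -
    define k where "k = (\<lambda>j. B j * of_bool (\<not> delta j \<and> xn j))"
    have split: "{1..n} = {1..<i} \<union> {i..n}" using i by auto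
    have W1: "W = (\<Sum>j=1..<i. k j) + (k i + (\<Sum>j=Suc i..n. k j))"
      unfolding W_def k_def[symmetric] split using i
      by (subst sum.union_disjoint) (auto simp: sum.atLeast_Suc_atMost)
    have ki: "k i = 0" using d by (simp add: k_def)
    have k1: "(\<Sum>j=1..<i. k j) = (\<Sum>j=1..<i. B j * of_bool (xn j))"
      using i xnd by (intro sum.cong) (auto simp: k_def)
    have k2: "(\<Sum>j=Suc i..n. a j + c j) + (\<Sum>j=Suc i..n. k j) = (\<Sum>j=Suc i..n. B j)"
      unfolding sum.distrib[symmetric] using i
      by (intro sum.cong) (auto simp: a_def c_def k_def)
    have "(\<Sum>j=i..n. B j) = B i + (\<Sum>j=Suc i..n. B j)"
      using i by (simp add: sum.atLeast_Suc_atMost)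
    then show ?thesis using W1 ki k1 k2 i d unfolding EE_def by (simp add: a_def)
  qed
  have fac: "1 - (of_bool (delta i) * B i * of_bool (T i \<le> t)) /
        ((\<Sum>j=i..n. B j) + (\<Sum>j=1..<i. B j * of_bool (xn j)))
      = (if T i \<le> t then 1 - lam n a c W i else 1)" if i: "i \<in> {1..n}" for i t
  proof (cases "delta i")
    case True
    then show ?thesis using D[OF i True] i by (simp add: lam_def a_def)
  next
    case False
    then show ?thesis using i by (simp add: lam_def a_def)
  qed
  have St: "1 - (\<Sum>j\<in>{j\<in>{1..n}. T j \<le> t}. P j) = S_hat n B T delta xn t" for t
  proof -
    have "S_hat n B T delta xn t = (\<Prod>i=1..n. (if T i \<le> t then 1 - lam n a c W i else 1))"
      unfolding S_hat_def using fac by (intro prod.cong) auto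
    also have "\<dots> = (\<Prod>i\<in>{j\<in>{1..n}. T j \<le> t}. 1 - lam n a c W i)"
      by (rule prod.inter_filter[symmetric]) simp
    finally have S1: "S_hat n B T delta xn t = (\<Prod>i\<in>{j\<in>{1..n}. T j \<le> t}. 1 - lam n a c W i)" .
    obtain k where "{j\<in>{1..n}. T j \<le> t} = {1..k}" using down_closed_eq[OF assms(2)] by blast
    then show ?thesis unfolding S1 P_def using telescope by simp
  qed
  show ?thesis
    unfolding B_def[symmetric] xn_def[symmetric]
    using subP Pmax St L by (intro exI[of _ P]) auto
qed

end
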